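(* Fix $I,M,R$ and a coupling $\mathcal{T}$ in which every variable $m\in\{1,\dots,M\}$ belongs to at least one triplet. The PCTF3D model $(\mu,\Theta)$ is identifiable (respectively generically recoverable) if and only if the $R$-term additive polynomial model $(\mu,\Theta')$, $\Theta'=\Theta_1^R$, is identifiable (respectively generically recoverable).
   Context: Coupling: a set $\mathcal{T}$ of $T$ three-element subsets of $\{1,\dots,M\}$. Parameters $\theta=(\theta_1,\dots,\theta_R)$, $\theta_r=(\lambda_r,\mathbf{a}^{(1)}_r,\dots,\mathbf{a}^{(M)}_r)\in\mathbb{R}\times(\mathbb{R}^I)^M$. Rank-one map $\mu_1(\theta_r)=\lambda_r\big(\mathrm{vec}(\mathbf{a}^{(j)}_r\circ\mathbf{a}^{(k)}_r\circ\mathbf{a}^{(\ell)}_r)\big)_{\{j,k,\ell\}\in\mathcal{T}}\in\mathbb{R}^{TI^3}$ (triplets listed in a fixed order, $j<k<\ell$), and $\mu(\theta)=\mu_1(\theta_1)+\cdots+\mu_1(\theta_R)$. Constraint sets: $\Theta=\{\theta:\lambda_r\ge0,\ \sum_r\lambda_r=1,\ \mathbf{a}^{(m)}_r\ge0,\ \mathbf{1}_I^T\mathbf{a}^{(m)}_r=1\}$; $\Theta_1=\mathbb{R}_+\times\Delta_I^M=\{(\lambda,\mathbf{a}^{(1)},\dots,\mathbf{a}^{(M)}):\lambda\ge0,\mathbf{a}^{(m)}\ge0,\mathbf{1}_I^T\mathbf{a}^{(m)}=1\}$ and $\Theta'=\Theta_1^R$ (no sum constraint on the $\lambda_r$). "Generic"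 means outside a subset of measure zero with respect to Lebesgue measure on the affine hull of the relevant constraint set. Identifiability of $(\mu,\Theta)$: for generic $\theta\in\Theta$, every $\theta'\in\Theta$ with $\mu(\theta')=\mu(\theta)$ is a permutation of the blocks $\theta_r$. Identifiability of the additive model $(\mu,\Theta_1^R)$: for generic $\theta\in\Theta_1^R$, every $\theta'\in\Theta_1^R$ with $\mu(\theta')=\mu(\theta)$ is obtained by permuting the blocks and replacing blocks $\theta_r$ by $\theta'_r$ with $\mu_1(\theta'_r)=\mu_1(\theta_r)$. A model $(\mu,S)$ is generically recoverable if for generic $\theta\in S$ the set $\{\theta'\in S:\mu(\theta')=\mu(\theta)\}$ is finite. *)

theory Defs
  imports "HOL-Analysis.Analysis"
begin

text \<open>Parameter block theta_r = (lambda_r, a_r^(1), ..., a_r^(M)): the second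
component is the M x I array of factor vectors (a_r^(m))_i = snd b $ m $ i.
I = CARD('i), M = CARD('m) (variables ordered by the linorder of 'm), R = CARD('r).\<close>

type_synonym ('i, 'm) block = "real \<times> (real ^ 'i ^ 'm)"
type_synonym ('i, 'm, 'r) param = "(real \<times> (real ^ 'i ^ 'm)) ^ 'r"

text \<open>A coupling: a set of triplets {j,k,l}, each represented by its elements
listed in increasing order j < k < l.\<close>
definition coupling :: "('m::{finite,linorder} \<times> 'm \<times> 'm) set \<Rightarrow> bool" where
  "coupling T \<longleftrightarrow> (\<forall>(j,k,l)\<in>T. j < k \<and> k < l)"

text \<open>Rank-one map mu_1: for each triplet (j,k,l) in T, the (vectorized)
tensor lambda * a^(j) o a^(k) o a^(l); entries are indexed by
(triplet, i1, i2, i3). Coordinates for triples not in T are set to 0.\<close>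
definition mu1 :: "('m::{finite,linorder} \<times> 'm \<times> 'm) set \<Rightarrow> ('i::finite, 'm) block
    \<Rightarrow> ('m \<times> 'm \<times> 'm) \<Rightarrow> 'i \<Rightarrow> 'i \<Rightarrow> 'i \<Rightarrow> real" where
  "mu1 T b = (\<lambda>(j,k,l) i1 i2 i3. if (j,k,l) \<in> T
      then fst b * (snd b $ j $ i1) * (snd b $ k $ i2) * (snd b $ l $ i3) else 0)"

definition mu :: "('m::{finite,linorder} \<times> 'm \<times> 'm) set \<Rightarrow> ('i::finite, 'm, 'r::finite) param
    \<Rightarrow> ('m \<times> 'm \<times> 'm) \<Rightarrow> 'i \<Rightarrow> 'i \<Rightarrow> 'i \<Rightarrow> real" where
  "mu T \<theta> = (\<lambda>t i1 i2 i3. \<Sum>r\<in>UNIV. mu1 T (\<theta> $ r) t i1 i2 i3)"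

definition Theta1 :: "('i::finite, 'm::finite) block set" where
  "Theta1 = {b. fst b \<ge> 0 \<and> (\<forall>m i. snd b $ m $ i \<ge> 0) \<and> (\<forall>m. (\<Sum>i\<in>UNIV. snd b $ m $ i) = 1)}"

definition ThetaP :: "('i::finite, 'm::finite, 'r::finite) param set" where
  "ThetaP = {\<theta>. \<forall>r. \<theta> $ r \<in> Theta1}"

definition Theta :: "('i::finite, 'm::finite, 'r::finite) param set" where
  "Theta = {\<theta>. (\<forall>r. \<theta> $ r \<in> Theta1) \<and> (\<Sum>r\<in>UNIV. fst (\<theta> $ r)) = 1}"

text \<open>A set N has measure zero with respect to Lebesgue measure on the affine hull
of S. With V the direction (linear subspace parallel to affine hull S) and W its
orthogonal complement, the ambient space is isometric to (affine hull S) x W via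
(a,w) |-> a + w, so (by Fubini) N is null in the affine hull iff N + W is
Lebesgue-null in the ambient Euclidean space.\<close>
definition affine_null :: "'a::euclidean_space set \<Rightarrow> 'a set \<Rightarrow> bool" where
  "affine_null S N \<longleftrightarrow>
     (let V = span {x - y | x y. x \<in> S \<and> y \<in> S};
          W = {w. \<forall>v\<in>V. inner w v = 0}
      in N \<subseteq> affine hull S \<and> {x + w | x w. x \<in> N \<and> w \<in> W} \<in> null_sets lebesgue)"

definition generically :: "'a::euclidean_space set \<Rightarrow> ('a \<Rightarrow> bool) \<Rightarrow> bool" where
  "generically S P \<longleftrightarrow> (\<exists>N. affine_null S N \<and> (\<forall>\<theta>\<in>S - N. P \<theta>))"

definition identifiable :: "('m::{finite,linorder} \<times> 'm \<times> 'm) set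
    \<Rightarrow> ('i::finite, 'm, 'r::finite) param set \<Rightarrow> bool" where
  "identifiable T S \<longleftrightarrow> generically S (\<lambda>\<theta>.
     \<forall>\<theta>'\<in>S. mu T \<theta>' = mu T \<theta> \<longrightarrow>
       (\<exists>\<sigma>. \<sigma> permutes (UNIV :: 'r set) \<and> (\<forall>r. \<theta>' $ r = \<theta> $ (\<sigma> r))))"

definition additive_identifiable :: "('m::{finite,linorder} \<times> 'm \<times> 'm) set
    \<Rightarrow> ('i::finite, 'm, 'r::finite) param set \<Rightarrow> bool" where
  "additive_identifiable T S \<longleftrightarrow> generically S (\<lambda>\<theta>.
     \<forall>\<theta>'\<in>S. mu T \<theta>' = mu T \<theta> \<longrightarrow>
       (\<exists>\<sigma>. \<sigma> permutes (UNIV :: 'r set) \<and> (\<forall>r. mu1 T (\<theta>' $ r) = mu1 T (\<theta> $ (\<sigma> r)))))"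

definition gen_recoverable :: "('m::{finite,linorder} \<times> 'm \<times> 'm) set
    \<Rightarrow> ('i::finite, 'm, 'r::finite) param set \<Rightarrow> bool" where
  "gen_recoverable T S \<longleftrightarrow> generically S (\<lambda>\<theta>. finite {\<theta>'\<in>S. mu T \<theta>' = mu T \<theta>})"

end

theory Submission
  imports Defs
begin

definition Pp :: "('i::finite,'m::finite,'r::finite) param \<Rightarrow> ('i,'m,'r) param" where
  "Pp x = (\<chi> r. (fst (x$r), 0))"
definition Qp :: "('i::finite,'m::finite,'r::finite) param \<Rightarrow> ('i,'m,'r) param" where
  "Qp x = (\<chi> r. (0, snd (x$r)))"
definition sc :: "real \<Rightarrow> ('i::finite,'m::finite,'r::finite) param \<Rightarrow> ('i,'m,'r) param" where
  "sc c x = (\<chi> r. (c * fst (x$r), snd (x$r)))"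
definition ee :: "('i::finite,'m::finite,'r::finite) param" where
  "ee = (\<chi> r. (1, 0))"
definition ER :: "'r \<Rightarrow> ('i::finite,'m::finite,'r::finite) param" where
  "ER r0 = (\<chi> r. if r = r0 then (1, 0) else 0)"
definition sL :: "('i::finite,'m::finite,'r::finite) param \<Rightarrow> real" where
  "sL x = (\<Sum>r\<in>UNIV. fst (x$r))"
definition y0 :: "('i::finite,'m::finite,'r::finite) param" where
  "y0 = (\<chi> r. (0, \<chi> m i. 1 / real CARD('i)))"

lemma ER_comp[simp]: "fst (ER r0 $ r) = (if r = r0 then 1 else 0)" "snd (ER r0 $ r) = 0"
  by (simp_all add: ER_def)

lemma sL_inner: "sL x = inner ee x"
  by (simp add: sL_def ee_def inner_vec_def inner_prod_def)

lemma inner_ER: "inner x (ER r0) = fst (x $ r0)"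
  by (simp add: ER_def inner_vec_def inner_prod_def if_distrib cong: if_cong)

lemma inner_Pp: "inner w (Pp z) = (\<Sum>r\<in>UNIV. fst (w$r) * fst (z$r))"
  by (simp add: Pp_def inner_vec_def inner_prod_def)

lemma PQ: "x = Pp x + Qp x"
  by (simp add: Pp_def Qp_def vec_eq_iff prod_eq_iff)

lemma sc_PQ: "sc c x = c *\<^sub>R Pp x + Qp x"
  by (simp add: sc_def Pp_def Qp_def vec_eq_iff prod_eq_iff)

lemma lin_Pp: "bounded_linear Pp"
  apply (rule bounded_linearI')
  by (simp_all add: Pp_def vec_eq_iff prod_eq_iff)

lemma lin_Qp: "bounded_linear Qp"
  apply (rule bounded_linearI')
  by (simp_all add: Qp_def vec_eq_iff prod_eq_iff)

lemma lin_sc: "bounded_linear (sc c)"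
  apply (rule bounded_linearI')
  by (simp_all add: sc_def vec_eq_iff prod_eq_iff algebra_simps)

lemma lin_sL: "bounded_linear sL"
  unfolding sL_inner[abs_def] by (rule bounded_linear_inner_right)

lemma sc_comp: "sc a (sc b x) = sc (a*b) x"
  by (simp add: sc_def vec_eq_iff)
lemma sc_1: "sc 1 x = x"
  by (simp add: sc_def vec_eq_iff)
lemma sL_sc: "sL (sc c x) = c * sL x"
  by (simp add: sL_def sc_def sum_distrib_left)
lemma sL_ee: "sL (ee :: ('i::finite,'m::finite,'r::finite) param) = real CARD('r)"
  by (simp add: sL_def ee_def)
lemma ee_nz: "(ee :: ('i::finite,'m::finite,'r::finite) param) \<noteq> 0"
  by (auto simp add: ee_def vec_eq_iff zero_prod_def)
lemma ER_nz: "(ER r :: ('i::finite,'m::finite,'r::finite) param) \<noteq> 0"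
  by (auto simp add: ER_def vec_eq_iff zero_prod_def)

lemma y0_ThetaP: "y0 \<in> ThetaP"
  by (simp add: y0_def ThetaP_def Theta1_def)
lemma y0ER_Theta: "y0 + ER r \<in> Theta"
  by (simp add: y0_def Theta_def Theta1_def)
lemma y0ER_ThetaP: "y0 + ER r \<in> ThetaP"
  by (simp add: y0_def ThetaP_def Theta1_def)
lemma QER_Theta: "x \<in> ThetaP \<Longrightarrow> Qp x + ER r \<in> Theta"
  by (simp add: Qp_def Theta_def Theta1_def ThetaP_def)
lemma sc_ThetaP: "x \<in> ThetaP \<Longrightarrow> c \<ge> 0 \<Longrightarrow> sc c x \<in> ThetaP"
  by (simp add: sc_def ThetaP_def Theta1_def)
lemma Theta_ThetaP: "Theta \<subseteq> ThetaP"
  by (auto simp add: Theta_def ThetaP_def)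
lemma Theta_sL: "x \<in> Theta \<Longrightarrow> sL x = 1"
  by (simp add: Theta_def sL_def)
lemma ThetaP_sL: "x \<in> ThetaP \<Longrightarrow> sL x \<ge> 0"
  unfolding ThetaP_def Theta1_def sL_def by (auto intro: sum_nonneg)
lemma sc_Theta: "x \<in> ThetaP \<Longrightarrow> sL x > 0 \<Longrightarrow> sc (1 / sL x) x \<in> Theta"
  using sL_sc[of "1 / sL x" x] sc_ThetaP[of x "1/sL x"]
  by (simp add: Theta_def ThetaP_def sL_def)


definition Wof :: "'a::euclidean_space set \<Rightarrow> 'a set" where
  "Wof S = {w. \<forall>x\<in>S. \<forall>y\<in>S. inner w (x - y) = 0}"

lemma Wof_eq: "{w. \<forall>v\<in>span {x - y |x y. x \<in> S \<and> y \<in> S}. inner w v = 0} = Wof S"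
proof safe
  fix w assume "\<forall>v\<in>span {x - y |x y. x \<in> S \<and> y \<in> S}. inner w v = 0"
  then show "w \<in> Wof S" unfolding Wof_def by (auto intro: span_base)
next
  fix w v assume w: "w \<in> Wof S" and v: "v \<in> span {x - y |x y. x \<in> S \<and> y \<in> S}"
  have "orthogonal w v"
    by (rule orthogonal_to_span[OF v]) (use w in \<open>auto simp: Wof_def orthogonal_def\<close>)
  then show "inner w v = 0" by (simp add: orthogonal_def)
qed

lemma affine_null_iff: "affine_null S N \<longleftrightarrow> N \<subseteq> affine hull S \<and> negligible {x + w |x w. x \<in> N \<and> w \<in> Wof S}"
  unfolding affine_null_def Let_def Wof_eq negligible_iff_null_sets by simp

lemma generically_iff: "generically S P \<longleftrightarrow> (\<exists>N. N \<subseteq> affine hull S \<and> negligible {x + w |x w. x \<in> N \<and> w \<in> Wof S} \<and> (\<forall>\<theta>\<in>S - N. P \<theta>))"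
  unfolding generically_def affine_null_iff by simp

lemma gen_mono: "generically S P \<Longrightarrow> (\<And>x. x \<in> S \<Longrightarrow> P x \<Longrightarrow> Q x) \<Longrightarrow> generically S Q"
  unfolding generically_def by blast

lemma gen_conj: assumes "generically S P" "generically S Q" shows "generically S (\<lambda>x. P x \<and> Q x)"
proof -
  obtain N1 where N1: "N1 \<subseteq> affine hull S" "negligible {x + w |x w. x \<in> N1 \<and> w \<in> Wof S}" "\<forall>\<theta>\<in>S - N1. P \<theta>"
    using assms(1) unfolding generically_iff by blast
  obtain N2 where N2: "N2 \<subseteq> affine hull S" "negligible {x + w |x w. x \<in> N2 \<and> w \<in> Wof S}" "\<forall>\<theta>\<in>S - N2. Q \<theta>"
    using assms(2) unfolding generically_iff by blast
  have "{x + w |x w. x \<in> N1 \<union> N2 \<and> w \<in> Wof S} = {x + w |x w. x \<in> N1 \<and> w \<in> Wof S} \<union> {x + w |x w. x \<in> N2 \<and> w \<in> Wof S}"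
    by blast
  then have "negligible {x + w |x w. x \<in> N1 \<union> N2 \<and> w \<in> Wof S}"
    using N1(2) N2(2) by (simp add: negligible_Un)
  then show ?thesis unfolding generically_iff
    by (intro exI[of _ "N1 \<union> N2"]) (use N1 N2 in auto)
qed

lemma W'_lam: "w \<in> Wof ThetaP \<Longrightarrow> fst (w$r) = 0"
proof -
  assume "w \<in> Wof ThetaP"
  then have "inner w ((y0 + ER r) - y0) = 0"
    using y0ER_ThetaP[of r] y0_ThetaP unfolding Wof_def by blast
  then show ?thesis by (simp add: inner_ER)
qed

lemma W'_Pp: "w \<in> Wof ThetaP \<Longrightarrow> Pp w = 0"
  using W'_lam[of w] by (simp add: Pp_def vec_eq_iff zero_prod_def)

lemma W'_sL: "w \<in> Wof ThetaP \<Longrightarrow> sL w = 0"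
  using W'_lam[of w] by (simp add: sL_def)

lemma W'_Qp: "w \<in> Wof ThetaP \<Longrightarrow> Qp w = w"
  using PQ[of w] W'_Pp[of w] by simp

lemma W'_sub: "Wof ThetaP \<subseteq> Wof Theta"
  using Theta_ThetaP unfolding Wof_def by blast

lemma ee_W: "ee \<in> Wof Theta"
  unfolding Wof_def
proof (intro CollectI ballI)
  fix x y :: "('a,'b,'c) param" assume "x \<in> Theta" "y \<in> Theta"
  then have "sL x = 1" "sL y = 1" using Theta_sL by auto
  then show "inner ee (x - y) = 0" by (simp add: inner_diff_right sL_inner)
qed

lemma W_add: "a \<in> Wof S \<Longrightarrow> b \<in> Wof S \<Longrightarrow> a + b \<in> Wof S"
  unfolding Wof_def by (simp add: inner_add_left)

lemma W_scale: "a \<in> Wof S \<Longrightarrow> c *\<^sub>R a \<in> Wof S"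
  unfolding Wof_def by simp

lemma A_sL: "x \<in> affine hull Theta \<Longrightarrow> sL x = 1"
proof -
  assume x: "x \<in> affine hull Theta"
  have "affine hull Theta \<subseteq> {x. inner ee x = 1}"
    by (rule hull_minimal) (use Theta_sL in \<open>auto simp: sL_inner affine_hyperplane\<close>)
  then show ?thesis using x by (auto simp: sL_inner)
qed

lemma sc_A: assumes "c \<ge> 0" "x \<in> affine hull Theta" shows "sc c x \<in> affine hull ThetaP"
proof -
  have "sc c ` (affine hull Theta) = affine hull (sc c ` Theta)"
    by (rule affine_hull_linear_image[OF lin_sc])
  also have "\<dots> \<subseteq> affine hull ThetaP"
    by (rule hull_mono) (use assms(1) Theta_ThetaP sc_ThetaP in blast)
  finally show ?thesis using assms(2) by blast
qed

lemma W_const: assumes "w \<in> Wof Theta" shows "fst (w$r1) = fst (w$r2)"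
proof -
  have "inner w ((y0 + ER r1) - (y0 + ER r2)) = 0"
    using assms y0ER_Theta unfolding Wof_def by blast
  then show ?thesis by (simp add: inner_diff_right inner_ER)
qed

lemma W_decomp: assumes w: "w \<in> Wof Theta" shows "w - fst (w$r0) *\<^sub>R ee \<in> Wof ThetaP"
proof -
  let ?t = "fst (w$r0)"
  have IP: "inner w (Pp z) = ?t * sL z" for z
    unfolding inner_Pp sL_def sum_distrib_left using W_const[OF w, of _ r0] by (auto intro: sum.cong)
  have IQ: "inner w (Qp x - Qp y) = 0" if "x \<in> ThetaP" "y \<in> ThetaP" for x y
  proof -
    have "inner w ((Qp x + ER r0) - (Qp y + ER r0)) = 0"
      using w QER_Theta that unfolding Wof_def by blast
    then show ?thesis by simp
  qed
  show ?thesis unfolding Wof_def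
  proof (intro CollectI ballI)
    fix x y :: "('a,'b,'c) param" assume xy: "x \<in> ThetaP" "y \<in> ThetaP"
    have "inner w (x - y) = inner w (Pp (x - y)) + inner w (Qp x - Qp y)"
      using PQ[of "x - y"] linear_diff[OF bounded_linear.linear[OF lin_Qp]]
      by (metis inner_add_right)
    also have "\<dots> = ?t * sL (x - y)" using IP IQ[OF xy] by simp
    finally show "inner (w - ?t *\<^sub>R ee) (x - y) = 0"
      by (simp add: inner_diff_left sL_inner)
  qed
qed


lemma Pp_sc: "Pp (sc c x) = c *\<^sub>R Pp x"
  by (simp add: sc_def Pp_def vec_eq_iff)
lemma Qp_sc: "Qp (sc c x) = Qp x"
  by (simp add: sc_def Qp_def vec_eq_iff)
lemma Pp_add: "Pp (x + y) = Pp x + Pp y"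
  by (simp add: Pp_def vec_eq_iff)
lemma Qp_add: "Qp (x + y) = Qp x + Qp y"
  by (simp add: Qp_def vec_eq_iff)
lemma sc_add: "sc c (x + y) = sc c x + sc c y"
  by (simp add: sc_def vec_eq_iff algebra_simps)
lemma sL_add: "sL (x + y) = sL x + sL y"
  by (simp add: sL_def sum.distrib)
lemma sL_scaleR: "sL (c *\<^sub>R x) = c * sL x"
  by (simp add: sL_def sum_distrib_left)
lemma sL_diff: "sL (x - y) = sL x - sL y"
  by (simp add: sL_def sum_subtractf)

definition Psi :: "('i::finite,'m::finite,'r::finite) param \<Rightarrow> ('i,'m,'r) param" where
  "Psi p = (1 / sL p) *\<^sub>R Pp p + Qp p + ln (sL p) *\<^sub>R ee"

definition Phi :: "('i::finite,'m::finite,'r::finite) param \<Rightarrow> ('i,'m,'r) param" where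
  "Phi q = sc (exp ((sL q - 1) / real CARD('r))) (q - ((sL q - 1) / real CARD('r)) *\<^sub>R ee)"

lemma lin_diff: "bounded_linear f \<Longrightarrow> f differentiable at x within s"
  using bounded_linear_imp_differentiable differentiable_at_withinI by blast

lemma Psi_diff: "Psi differentiable_on {p. sL p > 0}"
proof (rule differentiable_at_imp_differentiable_on, safe)
  fix p :: "('a,'b,'c) param" assume pos: "sL p > 0"
  have dL: "sL differentiable at p" by (rule lin_diff[OF lin_sL])
  have dln: "ln differentiable at (sL p)"
    unfolding differentiable_def using DERIV_ln[OF pos] has_field_derivative_imp_has_derivative by blast
  have d1: "(\<lambda>p. ln (sL p)) differentiable at p"
    by (rule differentiable_compose[OF dln dL])
  have d2: "(\<lambda>p. 1 / sL p) differentiable at p"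
    using dL pos by (intro differentiable_divide) auto
  show "Psi differentiable at p"
    unfolding Psi_def[abs_def]
    by (intro differentiable_add differentiable_scaleR d1 d2 lin_diff lin_Pp lin_Qp differentiable_const)
qed

lemma Phi_diff: "(Phi :: ('a::finite,'b::finite,'c::finite) param \<Rightarrow> _) differentiable_on S"
proof (rule differentiable_at_imp_differentiable_on)
  fix q :: "('a,'b,'c) param"
  let ?f = "\<lambda>q. (sL q - 1) / real CARD('c)"
  have dL: "sL differentiable at q" by (rule lin_diff[OF lin_sL])
  have df: "?f differentiable at q"
    using dL by (intro differentiable_divide differentiable_diff differentiable_const) auto
  have dexp: "exp differentiable at (?f q)"
    unfolding differentiable_def using DERIV_exp has_field_derivative_imp_has_derivative by blast
  have d1: "(\<lambda>q. exp (?f q)) differentiable at q"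
    by (rule differentiable_compose[OF dexp df])
  have dg: "(\<lambda>q. q - ?f q *\<^sub>R ee) differentiable at q"
    by (intro differentiable_diff differentiable_scaleR df differentiable_ident differentiable_const)
  have dP: "(\<lambda>q. Pp (q - ?f q *\<^sub>R ee)) differentiable at q"
    by (rule differentiable_compose[OF lin_diff[OF lin_Pp] dg])
  have dQ: "(\<lambda>q. Qp (q - ?f q *\<^sub>R ee)) differentiable at q"
    by (rule differentiable_compose[OF lin_diff[OF lin_Qp] dg])
  have eq: "(Phi :: ('a,'b,'c) param \<Rightarrow> _) = (\<lambda>q. exp (?f q) *\<^sub>R Pp (q - ?f q *\<^sub>R ee) + Qp (q - ?f q *\<^sub>R ee))"
    by (simp add: Phi_def[abs_def] sc_PQ)
  show "Phi differentiable at q"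
    unfolding eq by (intro differentiable_add differentiable_scaleR d1 dP dQ)
qed

lemma neg_image:
  fixes f :: "('a::finite,'b::finite,'c::finite) param \<Rightarrow> ('a,'b,'c) param"
  shows "negligible S \<Longrightarrow> f differentiable_on S \<Longrightarrow> negligible (f ` S)"
  by (rule negligible_differentiable_image_negligible[OF order_refl])

lemma G1:
  assumes "generically (ThetaP :: ('a::finite,'b::finite,'c::finite) param set) P"
  shows "generically (Theta :: ('a,'b,'c) param set) (\<lambda>\<theta>. \<exists>c>0. P (sc c \<theta>))"
proof -
  obtain N' :: "('a,'b,'c) param set" where N': "N' \<subseteq> affine hull ThetaP"
    "negligible {x + w |x w. x \<in> N' \<and> w \<in> Wof ThetaP}" "\<forall>\<theta>\<in>ThetaP - N'. P \<theta>"
    using assms unfolding generically_iff by blast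
  define N where "N = {\<theta> \<in> affine hull Theta. \<forall>c>0. sc c \<theta> \<in> N'}"
  let ?B = "{x + w |x w. x \<in> N' \<and> w \<in> Wof ThetaP} \<inter> {p. sL p > 0}"
  have negB: "negligible ?B" by (rule negligible_subset[OF N'(2)]) blast
  have negPB: "negligible (Psi ` ?B)"
    by (rule neg_image[OF negB]) (rule differentiable_on_subset[OF Psi_diff], blast)
  have sub: "{x + w |x w. x \<in> N \<and> w \<in> Wof Theta} \<subseteq> Psi ` ?B"
  proof (rule subsetI, elim CollectE exE conjE, simp only:)
    fix \<theta> :: "('a,'b,'c) param" and w :: "('a,'b,'c) param" assume th: "\<theta> \<in> N" and w: "w \<in> Wof Theta"
    define t where "t = fst (w $ (undefined::'c))"
    define w' where "w' = w - t *\<^sub>R ee"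
    have w': "w' \<in> Wof ThetaP" unfolding w'_def t_def by (rule W_decomp[OF w])
    define c where "c = exp t"
    have c: "c > 0" unfolding c_def by simp
    have thA: "\<theta> \<in> affine hull Theta" and thN: "sc c \<theta> \<in> N'" using th c unfolding N_def by auto
    define p where "p = sc c \<theta> + w'"
    have sLp: "sL p = c" unfolding p_def using A_sL[OF thA] W'_sL[OF w'] by (simp add: sL_add sL_sc)
    have pB: "p \<in> ?B"
    proof
      show "p \<in> {x + w |x w. x \<in> N' \<and> w \<in> Wof ThetaP}" unfolding p_def using thN w' by blast
      show "p \<in> {p. sL p > 0}" using sLp c by simp
    qed
    have Psip: "Psi p = \<theta> + w"
    proof -
      have "Psi p = (1 / c) *\<^sub>R (c *\<^sub>R Pp \<theta>) + (Qp \<theta> + w') + t *\<^sub>R ee"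
      proof -
        have "Pp p = c *\<^sub>R Pp \<theta>" unfolding p_def Pp_add Pp_sc W'_Pp[OF w'] by simp
        moreover have "Qp p = Qp \<theta> + w'" unfolding p_def Qp_add Qp_sc W'_Qp[OF w'] by simp
        moreover have "ln (sL p) = t" unfolding sLp c_def by simp
        ultimately show ?thesis unfolding Psi_def sLp by simp
      qed
      also have "\<dots> = (Pp \<theta> + Qp \<theta>) + w' + t *\<^sub>R ee" using c by simp
      also have "\<dots> = \<theta> + w" using PQ[of \<theta>] unfolding w'_def by simp
      finally show ?thesis .
    qed
    show "\<theta> + w \<in> Psi ` ?B" by (rule image_eqI[where f=Psi and x=p, OF Psip[symmetric] pB])
  qed
  have negN: "negligible {x + w |x w. x \<in> N \<and> w \<in> Wof Theta}"
    by (rule negligible_subset[OF negPB sub])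
  have propN: "\<exists>c>0. P (sc c \<theta>)" if th: "\<theta> \<in> Theta - N" for \<theta>
  proof -
    have thT: "\<theta> \<in> Theta" "\<theta> \<notin> N" using th by auto
    have "\<theta> \<in> affine hull Theta" using thT(1) hull_subset[of Theta affine] by blast
    then obtain c where c: "c > 0" "sc c \<theta> \<notin> N'" using thT(2) unfolding N_def by blast
    have thP: "\<theta> \<in> ThetaP" using thT(1) Theta_ThetaP by blast
    have "sc c \<theta> \<in> ThetaP" by (rule sc_ThetaP[OF thP less_imp_le[OF c(1)]])
    then have "P (sc c \<theta>)" using N'(3) c(2) by blast
    then show ?thesis using c(1) by blast
  qed
  have NA: "N \<subseteq> affine hull Theta" unfolding N_def by blast
  have PN: "\<forall>\<theta>\<in>Theta - N. \<exists>c>0. P (sc c \<theta>)" using propN by blast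
  show ?thesis unfolding generically_iff using NA negN PN by blast
qed


lemma G2:
  assumes "generically (Theta :: ('a::finite,'b::finite,'c::finite) param set) P"
  shows "generically (ThetaP :: ('a,'b,'c) param set) (\<lambda>\<theta>. sL \<theta> > 0 \<and> P (sc (1 / sL \<theta>) \<theta>))"
proof -
  obtain N :: "('a,'b,'c) param set" where N: "N \<subseteq> affine hull Theta"
    "negligible {x + w |x w. x \<in> N \<and> w \<in> Wof Theta}" "\<forall>\<theta>\<in>Theta - N. P \<theta>"
    using assms unfolding generically_iff by blast
  define N' where "N' = {p \<in> ThetaP. sL p = 0} \<union> {sc c \<theta> | c \<theta>. c > 0 \<and> \<theta> \<in> N}"
  let ?B = "{x + w |x w. x \<in> N \<and> w \<in> Wof Theta}"
  have negPB: "negligible (Phi ` ?B)"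
    by (rule neg_image[OF N(2) Phi_diff])
  have negH: "negligible {x :: ('a,'b,'c) param. inner ee x = 0}"
    by (rule negligible_hyperplane) (simp add: ee_nz)
  have sub: "{x + w |x w. x \<in> N' \<and> w \<in> Wof ThetaP} \<subseteq> {x. inner ee x = 0} \<union> Phi ` ?B"
  proof (rule subsetI, elim CollectE exE conjE, simp only:)
    fix p :: "('a,'b,'c) param" and w :: "('a,'b,'c) param"
    assume p: "p \<in> N'" and w: "w \<in> Wof ThetaP"
    show "p + w \<in> {x. inner ee x = 0} \<union> Phi ` ?B"
    proof (cases "p \<in> ThetaP \<and> sL p = 0")
      case True
      then have "inner ee (p + w) = 0" using W'_sL[OF w] by (simp add: sL_add flip: sL_inner)
      then show ?thesis by simp
    next
      case False
      then obtain c \<theta> where c: "c > 0" and th: "\<theta> \<in> N" and pe: "p = sc c \<theta>"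
        using p unfolding N'_def by blast
      define t where "t = ln c"
      define q where "q = \<theta> + (w + t *\<^sub>R ee)"
      have wW: "w + t *\<^sub>R ee \<in> Wof Theta"
        by (rule W_add[OF W'_sub[THEN subsetD, OF w] W_scale[OF ee_W]])
      have qB: "q \<in> ?B" unfolding q_def using th wW by (intro CollectI exI conjI) (rule refl)
      have thA: "sL \<theta> = 1" using A_sL th N(1) by blast
      have sLq: "sL q = 1 + t * real CARD('c)"
        unfolding q_def sL_add sL_scaleR thA W'_sL[OF w] sL_ee by simp
      have tq: "(sL q - 1) / real CARD('c) = t" unfolding sLq by simp
      have "Phi q = sc (exp t) (\<theta> + w)"
        unfolding Phi_def tq unfolding q_def by (simp add: algebra_simps)
      also have "\<dots> = sc c \<theta> + w"
        unfolding sc_add t_def using c by (simp add: sc_PQ W'_Pp[OF w] W'_Qp[OF w])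
      finally have "Phi q = p + w" using pe by simp
      then have "p + w \<in> Phi ` ?B" by (rule image_eqI[where f=Phi and x=q, OF sym qB])
      then show ?thesis by blast
    qed
  qed
  have negN': "negligible {x + w |x w. x \<in> N' \<and> w \<in> Wof ThetaP}"
    by (rule negligible_subset[OF negligible_Un[OF negH negPB] sub])
  have N'A: "N' \<subseteq> affine hull ThetaP"
  proof
    fix p assume "p \<in> N'"
    then consider "p \<in> ThetaP" | c \<theta> where "c > 0" "\<theta> \<in> N" "p = sc c \<theta>"
      unfolding N'_def by blast
    then show "p \<in> affine hull ThetaP"
    proof cases
      case 1 then show ?thesis using hull_subset[of ThetaP affine] by blast
    next
      case 2 then show ?thesis using sc_A[of c \<theta>] N(1) by auto
    qed
  qed
  have propN: "sL \<theta> > 0 \<and> P (sc (1 / sL \<theta>) \<theta>)" if th: "\<theta> \<in> ThetaP - N'" for \<theta>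
  proof -
    have "sL \<theta> \<noteq> 0" using th unfolding N'_def by blast
    then have s: "sL \<theta> > 0" using th ThetaP_sL[of \<theta>] by simp
    have inT: "sc (1 / sL \<theta>) \<theta> \<in> Theta" using sc_Theta s th by blast
    have "sc (1 / sL \<theta>) \<theta> \<notin> N"
    proof
      assume "sc (1 / sL \<theta>) \<theta> \<in> N"
      then have "sc (sL \<theta>) (sc (1 / sL \<theta>) \<theta>) \<in> N'" unfolding N'_def using s by blast
      then have "\<theta> \<in> N'" using s by (simp add: sc_comp sc_1)
      then show False using th by blast
    qed
    then show ?thesis using s inT N(3) by blast
  qed
  have PN: "\<forall>\<theta>\<in>ThetaP - N'. sL \<theta> > 0 \<and> P (sc (1 / sL \<theta>) \<theta>)" using propN by blast
  show ?thesis unfolding generically_iff using N'A negN' PN by blast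
qed

lemma gen_pos:
  "generically (ThetaP :: ('a::finite,'b::finite,'c::finite) param set) (\<lambda>\<theta>. \<forall>r. fst (\<theta> $ r) > 0)"
proof -
  define N :: "('a,'b,'c) param set" where "N = {p \<in> ThetaP. \<exists>r. fst (p $ r) = 0}"
  have sub: "{x + w |x w. x \<in> N \<and> w \<in> Wof ThetaP} \<subseteq> \<Union>((\<lambda>r. {x. inner (ER r) x = 0}) ` UNIV)"
  proof (rule subsetI, elim CollectE exE conjE, simp only:)
    fix p :: "('a,'b,'c) param" and w :: "('a,'b,'c) param"
    assume p: "p \<in> N" and w: "w \<in> Wof ThetaP"
    obtain r where "fst (p $ r) = 0" using p unfolding N_def by blast
    then have "inner (ER r) (p + w) = 0" using W'_lam[OF w, of r] by (simp add: inner_commute[of "ER r"] inner_ER)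
    then show "p + w \<in> \<Union>((\<lambda>r. {x. inner (ER r) x = 0}) ` UNIV)" by blast
  qed
  have neg: "negligible (\<Union>((\<lambda>r. {x :: ('a,'b,'c) param. inner (ER r) x = 0}) ` UNIV))"
  proof (rule negligible_Union)
    show "finite ((\<lambda>r. {x :: ('a,'b,'c) param. inner (ER r) x = 0}) ` UNIV)" by simp
    fix S assume "S \<in> (\<lambda>r. {x :: ('a,'b,'c) param. inner (ER r) x = 0}) ` UNIV"
    then obtain r where "S = {x :: ('a,'b,'c) param. inner (ER r) x = 0}" by blast
    then show "negligible S" using negligible_hyperplane[of "ER r" 0] ER_nz[of r] by simp
  qed
  have pos: "\<forall>\<theta>\<in>ThetaP - N. \<forall>r. fst (\<theta> $ r) > 0"
  proof (intro ballI allI)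
    fix \<theta> :: "('a,'b,'c) param" and r assume th: "\<theta> \<in> ThetaP - N"
    then have "fst (\<theta>$r) \<ge> 0" unfolding ThetaP_def Theta1_def by blast
    moreover have "fst (\<theta>$r) \<noteq> 0" using th unfolding N_def by blast
    ultimately show "fst (\<theta>$r) > 0" by linarith
  qed
  have NA: "N \<subseteq> affine hull ThetaP" using hull_subset[of ThetaP affine] unfolding N_def by blast
  show ?thesis unfolding generically_iff
    using negligible_subset[OF neg sub] NA pos by blast
qed

lemma marg:
  assumes b: "b \<in> Theta1" and t: "(j,k,l) \<in> T"
  shows "(\<Sum>i2\<in>UNIV. \<Sum>i3\<in>UNIV. mu1 T b (j,k,l) i1 i2 i3) = fst b * (snd b $ j $ i1)"
    and "(\<Sum>i1\<in>UNIV. \<Sum>i3\<in>UNIV. mu1 T b (j,k,l) i1 i2 i3) = fst b * (snd b $ k $ i2)"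
    and "(\<Sum>i1\<in>UNIV. \<Sum>i2\<in>UNIV. mu1 T b (j,k,l) i1 i2 i3) = fst b * (snd b $ l $ i3)"
proof -
  have s: "(\<Sum>i\<in>UNIV. snd b $ m $ i) = 1" for m using b unfolding Theta1_def by blast
  show "(\<Sum>i2\<in>UNIV. \<Sum>i3\<in>UNIV. mu1 T b (j,k,l) i1 i2 i3) = fst b * (snd b $ j $ i1)"
    using t by (simp add: mu1_def sum_distrib_left[symmetric] s)
  show "(\<Sum>i1\<in>UNIV. \<Sum>i3\<in>UNIV. mu1 T b (j,k,l) i1 i2 i3) = fst b * (snd b $ k $ i2)"
    using t by (simp add: mu1_def sum_distrib_left[symmetric] sum_distrib_right[symmetric] s)
  show "(\<Sum>i1\<in>UNIV. \<Sum>i2\<in>UNIV. mu1 T b (j,k,l) i1 i2 i3) = fst b * (snd b $ l $ i3)"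
    using t by (simp add: mu1_def sum_distrib_left[symmetric] sum_distrib_right[symmetric] s)
qed

lemma tot:
  assumes b: "b \<in> Theta1" and t: "(j,k,l) \<in> T"
  shows "(\<Sum>i1\<in>UNIV. \<Sum>i2\<in>UNIV. \<Sum>i3\<in>UNIV. mu1 T b (j,k,l) i1 i2 i3) = fst b"
proof -
  have s: "(\<Sum>i\<in>UNIV. snd b $ m $ i) = 1" for m using b unfolding Theta1_def by blast
  show ?thesis using marg(1)[OF b t] by (simp add: sum_distrib_left[symmetric] s)
qed

lemma mu1_inj:
  assumes b: "b \<in> Theta1" and b': "b' \<in> Theta1" and pos: "fst b > 0"
    and eq: "mu1 T b = mu1 T b'"
    and cov: "\<forall>m. \<exists>(j,k,l)\<in>T. m = j \<or> m = k \<or> m = l"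
  shows "b = b'"
proof -
  obtain j k l where t: "(j,k,l) \<in> T" using cov by blast
  have fe: "fst b = fst b'" using tot[OF b t] tot[OF b' t] eq by simp
  have "snd b $ m $ i = snd b' $ m $ i" for m i
  proof -
    obtain j k l where t: "(j,k,l) \<in> T" and m: "m = j \<or> m = k \<or> m = l" using cov by blast
    have "fst b * (snd b $ m $ i) = fst b' * (snd b' $ m $ i)"
      using m
    proof (elim disjE)
      assume "m = j" then show ?thesis using marg(1)[OF b t, of i] marg(1)[OF b' t, of i] eq by simp
    next
      assume "m = k" then show ?thesis using marg(2)[OF b t, of i] marg(2)[OF b' t, of i] eq by simp
    next
      assume "m = l" then show ?thesis using marg(3)[OF b t, of i] marg(3)[OF b' t, of i] eq by simp
    qed
    then show ?thesis using fe pos by simp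
  qed
  then show ?thesis using fe by (simp add: prod_eq_iff vec_eq_iff)
qed

lemma mu_sc: "mu T (sc c \<theta>) = (\<lambda>t i1 i2 i3. c * mu T \<theta> t i1 i2 i3)"
  unfolding mu_def mu1_def sc_def fun_eq_iff
  by (clarsimp simp: sum_distrib_left mult.assoc if_distrib cong: if_cong)

lemma mu_tot:
  assumes th: "\<theta> \<in> ThetaP" and t: "(j,k,l) \<in> T"
  shows "(\<Sum>i1\<in>UNIV. \<Sum>i2\<in>UNIV. \<Sum>i3\<in>UNIV. mu T \<theta> (j,k,l) i1 i2 i3) = sL \<theta>"
proof -
  have "(\<Sum>i1\<in>UNIV. \<Sum>i2\<in>UNIV. \<Sum>i3\<in>UNIV. mu T \<theta> (j,k,l) i1 i2 i3)
      = (\<Sum>r\<in>UNIV. \<Sum>i1\<in>UNIV. \<Sum>i2\<in>UNIV. \<Sum>i3\<in>UNIV. mu1 T (\<theta>$r) (j,k,l) i1 i2 i3)"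
  proof -
    let ?F = "\<lambda>r i1 i2 i3. mu1 T (\<theta>$r) (j,k,l) i1 i2 i3"
    have "(\<Sum>i1\<in>UNIV. \<Sum>i2\<in>UNIV. \<Sum>i3\<in>UNIV. \<Sum>r\<in>UNIV. ?F r i1 i2 i3)
        = (\<Sum>i1\<in>UNIV. \<Sum>i2\<in>UNIV. \<Sum>r\<in>UNIV. \<Sum>i3\<in>UNIV. ?F r i1 i2 i3)"
      by (rule sum.cong[OF refl], rule sum.cong[OF refl], rule sum.swap)
    also have "\<dots> = (\<Sum>i1\<in>UNIV. \<Sum>r\<in>UNIV. \<Sum>i2\<in>UNIV. \<Sum>i3\<in>UNIV. ?F r i1 i2 i3)"
      by (rule sum.cong[OF refl], rule sum.swap)
    also have "\<dots> = (\<Sum>r\<in>UNIV. \<Sum>i1\<in>UNIV. \<Sum>i2\<in>UNIV. \<Sum>i3\<in>UNIV. ?F r i1 i2 i3)"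
      by (rule sum.swap)
    finally show ?thesis unfolding mu_def .
  qed
  also have "\<dots> = (\<Sum>r\<in>UNIV. fst (\<theta>$r))"
  proof (rule sum.cong[OF refl])
    fix r have "\<theta>$r \<in> Theta1" using th unfolding ThetaP_def by blast
    then show "(\<Sum>i1\<in>UNIV. \<Sum>i2\<in>UNIV. \<Sum>i3\<in>UNIV. mu1 T (\<theta>$r) (j,k,l) i1 i2 i3) = fst (\<theta>$r)"
      by (rule tot[OF _ t])
  qed
  finally show ?thesis unfolding sL_def .
qed

lemma sc_nth: "sc c \<theta> $ r = (c * fst (\<theta> $ r), snd (\<theta> $ r))"
  by (simp add: sc_def)

lemma ThetaP_block: "\<theta> \<in> ThetaP \<Longrightarrow> \<theta> $ r \<in> Theta1"
  unfolding ThetaP_def by blast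

lemma L1:
  fixes T :: "('m::{finite,linorder} \<times> 'm \<times> 'm) set"
  assumes A: "additive_identifiable T (ThetaP :: ('i::finite, 'm, 'r::finite) param set)"
    and cov: "\<forall>m. \<exists>(j,k,l)\<in>T. m = j \<or> m = k \<or> m = l"
  shows "identifiable T (Theta :: ('i, 'm, 'r) param set)"
proof -
  have g: "generically (ThetaP :: ('i, 'm, 'r) param set) (\<lambda>\<theta>. (\<forall>\<theta>'\<in>(ThetaP :: ('i,'m,'r) param set). mu T \<theta>' = mu T \<theta> \<longrightarrow>
       (\<exists>\<sigma>. \<sigma> permutes (UNIV :: 'r set) \<and> (\<forall>r. mu1 T (\<theta>' $ r) = mu1 T (\<theta> $ (\<sigma> r))))) \<and> (\<forall>r. fst (\<theta> $ r) > 0))"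
    by (rule gen_conj[OF A[unfolded additive_identifiable_def] gen_pos])
  show ?thesis unfolding identifiable_def
  proof (rule gen_mono[OF G1[OF g]])
    fix \<theta> :: "('i, 'm, 'r) param" assume th: "\<theta> \<in> Theta"
      and ex: "\<exists>c>0. (\<forall>\<theta>'\<in>(ThetaP :: ('i,'m,'r) param set). mu T \<theta>' = mu T (sc c \<theta>) \<longrightarrow>
       (\<exists>\<sigma>. \<sigma> permutes (UNIV :: 'r set) \<and> (\<forall>r. mu1 T (\<theta>' $ r) = mu1 T (sc c \<theta> $ (\<sigma> r))))) \<and> (\<forall>r. fst (sc c \<theta> $ r) > 0)"
    then obtain c where c: "c > 0" and PA: "\<forall>\<theta>'\<in>(ThetaP :: ('i,'m,'r) param set). mu T \<theta>' = mu T (sc c \<theta>) \<longrightarrow>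
       (\<exists>\<sigma>. \<sigma> permutes (UNIV :: 'r set) \<and> (\<forall>r. mu1 T (\<theta>' $ r) = mu1 T (sc c \<theta> $ (\<sigma> r))))"
      and pos: "\<forall>r. fst (sc c \<theta> $ r) > 0" by blast
    have thP: "sc c \<theta> \<in> ThetaP"
      by (rule sc_ThetaP[OF Theta_ThetaP[THEN subsetD, OF th] less_imp_le[OF c]])
    show "\<forall>\<theta>'\<in>(Theta :: ('i,'m,'r) param set). mu T \<theta>' = mu T \<theta> \<longrightarrow> (\<exists>\<sigma>. \<sigma> permutes UNIV \<and> (\<forall>r. \<theta>' $ r = \<theta> $ \<sigma> r))"
    proof (intro ballI impI)
      fix \<theta>' :: "('i, 'm, 'r) param" assume th': "\<theta>' \<in> Theta" and eq: "mu T \<theta>' = mu T \<theta>"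
      have th'P: "sc c \<theta>' \<in> ThetaP"
        by (rule sc_ThetaP[OF Theta_ThetaP[THEN subsetD, OF th'] less_imp_le[OF c]])
      have "mu T (sc c \<theta>') = mu T (sc c \<theta>)" by (simp add: mu_sc eq)
      then obtain \<sigma> where \<sigma>: "\<sigma> permutes (UNIV :: 'r set)"
        and m1: "\<forall>r. mu1 T (sc c \<theta>' $ r) = mu1 T (sc c \<theta> $ (\<sigma> r))"
        using PA th'P by blast
      have "\<theta>' $ r = \<theta> $ \<sigma> r" for r
      proof -
        have "sc c \<theta> $ \<sigma> r = sc c \<theta>' $ r"
          by (rule mu1_inj[OF ThetaP_block[OF thP] ThetaP_block[OF th'P] pos[rule_format] m1[rule_format, symmetric] cov])
        then have "c * fst (\<theta> $ \<sigma> r) = c * fst (\<theta>' $ r)" "snd (\<theta> $ \<sigma> r) = snd (\<theta>' $ r)"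
          by (simp_all add: sc_nth)
        then show ?thesis using c by (simp add: prod_eq_iff)
      qed
      then show "\<exists>\<sigma>. \<sigma> permutes UNIV \<and> (\<forall>r. \<theta>' $ r = \<theta> $ \<sigma> r)" using \<sigma> by blast
    qed
  qed
qed

lemma sL_eq:
  fixes T :: "('m::{finite,linorder} \<times> 'm \<times> 'm) set"
  assumes cov: "\<forall>m. \<exists>(j,k,l)\<in>T. m = j \<or> m = k \<or> m = l"
    and "\<theta> \<in> ThetaP" "\<theta>' \<in> ThetaP" "mu T \<theta>' = mu T (\<theta> :: ('i::finite, 'm, 'r::finite) param)"
  shows "sL \<theta>' = sL \<theta>"
proof -
  obtain j k l where t: "(j,k,l) \<in> T" using cov by blast
  show ?thesis using mu_tot[OF assms(2) t] mu_tot[OF assms(3) t] assms(4) by simp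
qed

lemma L2:
  fixes T :: "('m::{finite,linorder} \<times> 'm \<times> 'm) set"
  assumes A: "identifiable T (Theta :: ('i::finite, 'm, 'r::finite) param set)"
    and cov: "\<forall>m. \<exists>(j,k,l)\<in>T. m = j \<or> m = k \<or> m = l"
  shows "additive_identifiable T (ThetaP :: ('i, 'm, 'r) param set)"
  unfolding additive_identifiable_def
proof (rule gen_mono[OF G2[OF A[unfolded identifiable_def]]])
  fix \<theta> :: "('i, 'm, 'r) param" assume th: "\<theta> \<in> ThetaP"
    and h: "0 < sL \<theta> \<and> (\<forall>\<theta>'\<in>(Theta :: ('i,'m,'r) param set). mu T \<theta>' = mu T (sc (1 / sL \<theta>) \<theta>) \<longrightarrow>
       (\<exists>\<sigma>. \<sigma> permutes (UNIV :: 'r set) \<and> (\<forall>r. \<theta>' $ r = sc (1 / sL \<theta>) \<theta> $ \<sigma> r)))"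
  define s where "s = sL \<theta>"
  have s: "s > 0" unfolding s_def using h by blast
  have PT: "\<forall>\<theta>'\<in>(Theta :: ('i,'m,'r) param set). mu T \<theta>' = mu T (sc (1 / s) \<theta>) \<longrightarrow>
       (\<exists>\<sigma>. \<sigma> permutes (UNIV :: 'r set) \<and> (\<forall>r. \<theta>' $ r = sc (1 / s) \<theta> $ \<sigma> r))"
    unfolding s_def using h by blast
  show "\<forall>\<theta>'\<in>(ThetaP :: ('i,'m,'r) param set). mu T \<theta>' = mu T \<theta> \<longrightarrow>
       (\<exists>\<sigma>. \<sigma> permutes UNIV \<and> (\<forall>r. mu1 T (\<theta>' $ r) = mu1 T (\<theta> $ \<sigma> r)))"
  proof (intro ballI impI)
    fix \<theta>' :: "('i, 'm, 'r) param" assume th': "\<theta>' \<in> ThetaP" and eq: "mu T \<theta>' = mu T \<theta>"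
    have s': "sL \<theta>' = s" unfolding s_def by (rule sL_eq[OF cov th th' eq])
    have inT: "sc (1 / s) \<theta>' \<in> Theta" using sc_Theta[OF th'] s s' by simp
    have "mu T (sc (1 / s) \<theta>') = mu T (sc (1 / s) \<theta>)" by (simp add: mu_sc eq)
    then obtain \<sigma> where \<sigma>: "\<sigma> permutes (UNIV :: 'r set)"
      and bl: "\<forall>r. sc (1 / s) \<theta>' $ r = sc (1 / s) \<theta> $ \<sigma> r"
      using PT inT by blast
    have "\<theta>' $ r = \<theta> $ \<sigma> r" for r
    proof -
      have "(1 / s) * fst (\<theta>' $ r) = (1 / s) * fst (\<theta> $ \<sigma> r)" "snd (\<theta>' $ r) = snd (\<theta> $ \<sigma> r)"
        using bl[rule_format, of r] by (simp_all add: sc_nth)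
      then show ?thesis using s by (simp add: prod_eq_iff)
    qed
    then show "\<exists>\<sigma>. \<sigma> permutes UNIV \<and> (\<forall>r. mu1 T (\<theta>' $ r) = mu1 T (\<theta> $ \<sigma> r))" using \<sigma> by metis
  qed
qed

lemma sc_inj: "c \<noteq> 0 \<Longrightarrow> inj_on (sc c) S"
proof (rule inj_onI)
  fix x y assume c: "c \<noteq> 0" and "sc c x = sc c y"
  then have "sc (1/c) (sc c x) = sc (1/c) (sc c y)" by simp
  then show "x = y" using c by (simp add: sc_comp sc_1)
qed

lemma L3:
  fixes T :: "('m::{finite,linorder} \<times> 'm \<times> 'm) set"
  assumes A: "gen_recoverable T (ThetaP :: ('i::finite, 'm, 'r::finite) param set)"
  shows "gen_recoverable T (Theta :: ('i, 'm, 'r) param set)"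
  unfolding gen_recoverable_def
proof (rule gen_mono[OF G1[OF A[unfolded gen_recoverable_def]]])
  fix \<theta> :: "('i, 'm, 'r) param" assume th: "\<theta> \<in> Theta"
    and "\<exists>c>0. finite {\<theta>' \<in> (ThetaP :: ('i,'m,'r) param set). mu T \<theta>' = mu T (sc c \<theta>)}"
  then obtain c where c: "c > 0" and fin: "finite {\<theta>' \<in> (ThetaP :: ('i,'m,'r) param set). mu T \<theta>' = mu T (sc c \<theta>)}" by blast
  let ?F = "{\<theta>' \<in> (Theta :: ('i,'m,'r) param set). mu T \<theta>' = mu T \<theta>}"
  have "sc c ` ?F \<subseteq> {\<theta>' \<in> (ThetaP :: ('i,'m,'r) param set). mu T \<theta>' = mu T (sc c \<theta>)}"
  proof
    fix x assume "x \<in> sc c ` ?F"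
    then obtain y where y: "y \<in> Theta" "mu T y = mu T \<theta>" and x: "x = sc c y" by blast
    have "x \<in> ThetaP" unfolding x by (rule sc_ThetaP[OF Theta_ThetaP[THEN subsetD, OF y(1)] less_imp_le[OF c]])
    moreover have "mu T x = mu T (sc c \<theta>)" unfolding x by (simp add: mu_sc y(2))
    ultimately show "x \<in> {\<theta>' \<in> (ThetaP :: ('i,'m,'r) param set). mu T \<theta>' = mu T (sc c \<theta>)}" by blast
  qed
  then have fi: "finite (sc c ` ?F)" using fin by (rule finite_subset)
  have "inj_on (sc c) ?F" by (rule sc_inj) (use c in simp)
  then show "finite ?F" using fi by (simp add: finite_image_iff)
qed

lemma L4:
  fixes T :: "('m::{finite,linorder} \<times> 'm \<times> 'm) set"
  assumes A: "gen_recoverable T (Theta :: ('i::finite, 'm, 'r::finite) param set)"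
    and cov: "\<forall>m. \<exists>(j,k,l)\<in>T. m = j \<or> m = k \<or> m = l"
  shows "gen_recoverable T (ThetaP :: ('i, 'm, 'r) param set)"
  unfolding gen_recoverable_def
proof (rule gen_mono[OF G2[OF A[unfolded gen_recoverable_def]]])
  fix \<theta> :: "('i, 'm, 'r) param" assume th: "\<theta> \<in> ThetaP"
    and h: "0 < sL \<theta> \<and> finite {\<theta>' \<in> (Theta :: ('i,'m,'r) param set). mu T \<theta>' = mu T (sc (1 / sL \<theta>) \<theta>)}"
  define s where "s = sL \<theta>"
  have s: "s > 0" and fin: "finite {\<theta>' \<in> (Theta :: ('i,'m,'r) param set). mu T \<theta>' = mu T (sc (1 / s) \<theta>)}"
    unfolding s_def using h by blast+
  have "{\<theta>' \<in> (ThetaP :: ('i,'m,'r) param set). mu T \<theta>' = mu T \<theta>} \<subseteq> sc s ` {\<theta>' \<in> (Theta :: ('i,'m,'r) param set). mu T \<theta>' = mu T (sc (1 / s) \<theta>)}"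
  proof
    fix x assume "x \<in> {\<theta>' \<in> (ThetaP :: ('i,'m,'r) param set). mu T \<theta>' = mu T \<theta>}"
    then have x: "x \<in> ThetaP" "mu T x = mu T \<theta>" by auto
    have s': "sL x = s" unfolding s_def by (rule sL_eq[OF cov th x])
    have inT: "sc (1 / s) x \<in> Theta" using sc_Theta[OF x(1)] s s' by simp
    have "mu T (sc (1 / s) x) = mu T (sc (1 / s) \<theta>)" by (simp add: mu_sc x(2))
    moreover have "x = sc s (sc (1 / s) x)" using s by (simp add: sc_comp sc_1)
    ultimately show "x \<in> sc s ` {\<theta>' \<in> (Theta :: ('i,'m,'r) param set). mu T \<theta>' = mu T (sc (1 / s) \<theta>)}"
      using inT by blast
  qed
  then show "finite {\<theta>' \<in> (ThetaP :: ('i,'m,'r) param set). mu T \<theta>' = mu T \<theta>}"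
    using finite_imageI[OF fin, of "sc s"] by (rule finite_subset)
qed

theorem mainTheorem3:
  fixes T :: "('m::{finite,linorder} \<times> 'm \<times> 'm) set"
  assumes "coupling T"
    and "\<forall>m. \<exists>(j,k,l)\<in>T. m = j \<or> m = k \<or> m = l"
  shows "(identifiable T (Theta :: ('i::finite, 'm, 'r::finite) param set)
            \<longleftrightarrow> additive_identifiable T (ThetaP :: ('i, 'm, 'r) param set))
       \<and> (gen_recoverable T (Theta :: ('i, 'm, 'r) param set)
            \<longleftrightarrow> gen_recoverable T (ThetaP :: ('i, 'm, 'r) param set))"
  using L1[OF _ assms(2)] L2[OF _ assms(2)] L3 L4[OF _ assms(2)] by blast

end
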